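(* Let $K$ be a finite abstract simplicial complex with vertex set $V$, and let $\{U_1,\dots,U_m\}$ be a hard partition of $V$ (every vertex lies in exactly one $U_i$). Form the topological pooled complex $\mathrm{Nrv}(\mathcal{U})$ and the matrices $\mathbf{S}_{q,p}$, $\mathbf{S}_p:=\mathbf{S}_{p,p}$ of the matrix implementation, both as described in the context. Then the topological and matrix formulations produce the same pooled simplicial complex. Concretely: for every $p\ge 0$, the $p$-simplices of $\mathrm{Nrv}(\mathcal{U})$ are exactly the $p$-subsets $\tau$ of clusters that index the (nonzero) columns of $\mathbf{S}_p$; and for every $p\ge 1$ and all such $\tau_{p-1}$, $\tau_p$, the entry $\big(\mathbf{S}_{p-1}^T\,|\mathbf{B}_p|\,\mathbf{S}_p\big)[\tau_{p-1},\tau_p]$ is nonzero if and only if $\tau_{p-1}$ is a face of $\tau_p$ in $\mathrm{Nrv}(\mathcal{U})$, i.e. $\mathbf{S}_{p-1}^T|\mathbf{B}_p|\mathbf{S}_p$ has the same support as the non-oriented $p$-th boundary matrix of $\mathrm{Nrv}(\mathcal{U})$.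
   Context: A $p$-simplex is a set of $p+1$ vertices. For a vertex $v$ of $K$, its star is $St(v)=\{\sigma\in K: v\in\sigma\}$. Topological formulation: for each cluster put $\widetilde U_i=\bigcup_{v\in U_i}St(v)$ and $\mathcal{U}=\{\widetilde U_i\}_{i=1}^m$; the nerve $\mathrm{Nrv}(\mathcal{U})$ is the simplicial complex on vertex set $\{1,\dots,m\}$ (one vertex per cluster) whose simplices are the nonempty sets $\tau\subseteq\{1,\dots,m\}$ with $\bigcap_{i\in\tau}\widetilde U_i\neq\emptyset$. Matrix formulation: $|\mathbf{B}_p|$ denotes the non-oriented boundary matrix of $K$ (rows indexed by $(p-1)$-simplices, columns by $p$-simplices, entry $1$ if the row simplex is a face of the column simplex and $0$ otherwise). $\mathbf{S}_0$ is the $n_0\times m$ matrix with $\mathbf{S}_0[v,U_j]=1$ if $v\in U_j$ and $0$ otherwise. For $q>0$, $\mathbf{S}_{q,0}$ has rows indexed by $q$-simplices $\sigma$ of $K$ and columns by clusters, with $\mathbf{S}_{q,0}[\sigma,U_j]=1$ if $\mathbf{S}_0[v,U_j]=1$ for some vertex $v\in\sigma$, and $0$ otherwise. For $0<p\le q$, $\mathbf{S}_{q,p}$ has rows indexed by $q$-simplices of $K$ and a column for each set $\tau=\{U_{a_0},\dots,U_{a_p}\}$ of $p+1$ distinct clusters, given by the entrywise product $\mathbf{S}_{q,p}[\cdot,\tau]=\mathbf{S}_{q,0}[\cdot,U_{a_0}]\odot\cdots\odot\mathbf{S}_{q,0}[\cdot,U_{a_p}]$; columns that are identically zero are discarded (those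 $\tau$ are not simplices of the pooled complex). The block matrix assembled from the $\mathbf{S}_{q,p}$ ($p\le q$) may additionally be row-normalized so each row sums to $1$; this positive rescaling does not change supports. The pooled boundary matrices are $\mathbf{B}_p^{\mathrm{pooled}}=\mathbf{S}_{p-1}^T|\mathbf{B}_p|\mathbf{S}_p$. *)

theory Defs
  imports Complex_Main
begin

definition simplicial_complex :: "'a set set \<Rightarrow> bool" where
  "simplicial_complex K \<longleftrightarrow> finite K \<and>
     (\<forall>\<sigma>\<in>K. finite \<sigma> \<and> \<sigma> \<noteq> {}) \<and>
     (\<forall>\<sigma>\<in>K. \<forall>\<rho>. \<rho> \<subseteq> \<sigma> \<and> \<rho> \<noteq> {} \<longrightarrow> \<rho> \<in> K)"

definition vertices :: "'a set set \<Rightarrow> 'a set" where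
  "vertices K = \<Union>K"

definition simplices :: "'a set set \<Rightarrow> nat \<Rightarrow> 'a set set" where
  "simplices K p = {\<sigma>\<in>K. card \<sigma> = p + 1}"

definition star :: "'a set set \<Rightarrow> 'a \<Rightarrow> 'a set set" where
  "star K v = {\<sigma>\<in>K. v \<in> \<sigma>}"

definition hard_partition :: "'a set set \<Rightarrow> (nat \<Rightarrow> 'a set) \<Rightarrow> nat \<Rightarrow> bool" where
  "hard_partition K U m \<longleftrightarrow>
     (\<forall>i\<in>{1..m}. U i \<noteq> {} \<and> U i \<subseteq> vertices K) \<and>
     (\<forall>i\<in>{1..m}. \<forall>j\<in>{1..m}. i \<noteq> j \<longrightarrow> U i \<inter> U j = {}) \<and>
     (\<Union>i\<in>{1..m}. U i) = vertices K"

definition cluster_cover :: "'a set set \<Rightarrow> (nat \<Rightarrow> 'a set) \<Rightarrow> nat \<Rightarrow> 'a set set" where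
  "cluster_cover K U i = (\<Union>v\<in>U i. star K v)"

definition nerve :: "'a set set \<Rightarrow> (nat \<Rightarrow> 'a set) \<Rightarrow> nat \<Rightarrow> nat set set" where
  "nerve K U m = {\<tau>. \<tau> \<noteq> {} \<and> \<tau> \<subseteq> {1..m} \<and> (\<Inter>i\<in>\<tau>. cluster_cover K U i) \<noteq> {}}"

text \<open>Non-oriented boundary matrix |B_p| of a complex, as a function of
  (row (p-1)-simplex, column p-simplex); only meaningful on those index sets.\<close>
definition abs_boundary :: "'b set set \<Rightarrow> nat \<Rightarrow> 'b set \<Rightarrow> 'b set \<Rightarrow> real" where
  "abs_boundary K p \<rho> \<sigma> =
     (if \<rho> \<in> simplices K (p - 1) \<and> \<sigma> \<in> simplices K p \<and> \<rho> \<subseteq> \<sigma> then 1 else 0)"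

text \<open>Matrix formulation. S_0 (rows: vertices, columns: clusters).\<close>
definition S0 :: "(nat \<Rightarrow> 'a set) \<Rightarrow> 'a \<Rightarrow> nat \<Rightarrow> real" where
  "S0 U v j = (if v \<in> U j then 1 else 0)"

text \<open>S_{q,0} (rows: q-simplices, columns: clusters). For q = 0 the row {v}
  is identified with vertex v, and the formula reduces to S_0.\<close>
definition Sq0 :: "(nat \<Rightarrow> 'a set) \<Rightarrow> 'a set \<Rightarrow> nat \<Rightarrow> real" where
  "Sq0 U \<sigma> j = (if \<exists>v\<in>\<sigma>. S0 U v j = 1 then 1 else 0)"

text \<open>S_{q,p} entries: column indexed by a set tau of p+1 distinct clusters,
  entrywise product of the S_{q,0} columns of its clusters.\<close>
definition Sqp :: "(nat \<Rightarrow> 'a set) \<Rightarrow> 'a set \<Rightarrow> nat set \<Rightarrow> real" where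
  "Sqp U \<sigma> \<tau> = (\<Prod>j\<in>\<tau>. Sq0 U \<sigma> j)"

text \<open>Column index set of S_p = S_{p,p}: for p = 0 all m clusters (a cluster
  U_j is identified with the singleton {j}); for p > 0 the (p+1)-sets of
  clusters whose column is not identically zero.\<close>
definition S_columns :: "'a set set \<Rightarrow> (nat \<Rightarrow> 'a set) \<Rightarrow> nat \<Rightarrow> nat \<Rightarrow> nat set set" where
  "S_columns K U m p =
     (if p = 0 then {{j} | j. j \<in> {1..m}}
      else {\<tau>. \<tau> \<subseteq> {1..m} \<and> card \<tau> = p + 1 \<and>
                (\<exists>\<sigma>\<in>simplices K p. Sqp U \<sigma> \<tau> \<noteq> 0)})"

text \<open>Pooled boundary matrix S_{p-1}^T |B_p| S_p, entry (tau', tau).\<close>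
definition pooled_boundary ::
  "'a set set \<Rightarrow> (nat \<Rightarrow> 'a set) \<Rightarrow> nat \<Rightarrow> nat set \<Rightarrow> nat set \<Rightarrow> real" where
  "pooled_boundary K U p \<tau>' \<tau> =
     (\<Sum>\<rho>\<in>simplices K (p - 1). \<Sum>\<sigma>\<in>simplices K p.
        Sqp U \<rho> \<tau>' * abs_boundary K p \<rho> \<sigma> * Sqp U \<sigma> \<tau>)"

end

theory Submission
  imports Defs
begin

lemma Sqp_ne0:
  assumes "finite \<tau>"
  shows "Sqp U \<sigma> \<tau> \<noteq> 0 \<longleftrightarrow> (\<forall>j\<in>\<tau>. \<sigma> \<inter> U j \<noteq> {})"
  using assms by (auto simp: Sqp_def Sq0_def S0_def prod_zero_iff)

lemma Sqp_nonneg: "Sqp U \<sigma> \<tau> \<ge> 0"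
  by (auto simp: Sqp_def Sq0_def intro!: prod_nonneg)

lemma cc_eq: "cluster_cover K U i = {\<sigma>\<in>K. \<sigma> \<inter> U i \<noteq> {}}"
  by (auto simp: cluster_cover_def star_def)

lemma nerve_mem:
  "\<tau> \<in> nerve K U m \<longleftrightarrow> \<tau> \<noteq> {} \<and> \<tau> \<subseteq> {1..m} \<and> (\<exists>\<sigma>\<in>K. \<forall>i\<in>\<tau>. \<sigma> \<inter> U i \<noteq> {})"
  unfolding nerve_def cc_eq by auto

lemma pick:
  assumes K: "simplicial_complex K" and H: "hard_partition K U m"
    and s: "\<sigma> \<in> K" and t: "\<tau> \<subseteq> {1..m}" "finite \<tau>" "\<tau> \<noteq> {}"
    and meet: "\<forall>j\<in>\<tau>. \<sigma> \<inter> U j \<noteq> {}"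
  shows "\<exists>\<sigma>'\<subseteq>\<sigma>. \<sigma>' \<in> K \<and> card \<sigma>' = card \<tau> \<and> (\<forall>j\<in>\<tau>. \<sigma>' \<inter> U j \<noteq> {})"
proof -
  define f where "f j = (SOME v. v \<in> \<sigma> \<inter> U j)" for j
  have f: "f j \<in> \<sigma> \<inter> U j" if "j \<in> \<tau>" for j
    unfolding f_def using meet that by (metis ex_in_conv someI_ex)
  have inj: "inj_on f \<tau>"
  proof (rule inj_onI)
    fix i j assume ij: "i \<in> \<tau>" "j \<in> \<tau>" "f i = f j"
    show "i = j"
    proof (rule ccontr)
      assume "i \<noteq> j"
      then have "U i \<inter> U j = {}" using H ij t unfolding hard_partition_def by blast
      then show False using f[OF ij(1)] f[OF ij(2)] ij(3) by auto
    qed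
  qed
  have sub: "f ` \<tau> \<subseteq> \<sigma>" using f by auto
  have "f ` \<tau> \<in> K" using K s sub t(3) unfolding simplicial_complex_def by blast
  moreover have "card (f ` \<tau>) = card \<tau>" using card_image[OF inj] .
  moreover have "\<forall>j\<in>\<tau>. f ` \<tau> \<inter> U j \<noteq> {}" using f by blast
  ultimately show ?thesis using sub by blast
qed

lemma cover:
  assumes K: "simplicial_complex K" and H: "hard_partition K U m"
    and s: "\<sigma> \<in> K" and t: "\<tau> \<subseteq> {1..m}" "finite \<tau>" and c: "card \<sigma> = card \<tau>"
    and meet: "\<forall>j\<in>\<tau>. \<sigma> \<inter> U j \<noteq> {}"
    and v: "v \<in> \<sigma>"
  shows "\<exists>j\<in>\<tau>. v \<in> U j"
proof -
  define f where "f j = (SOME v. v \<in> \<sigma> \<inter> U j)" for j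
  have f: "f j \<in> \<sigma> \<inter> U j" if "j \<in> \<tau>" for j
    unfolding f_def using meet that by (metis ex_in_conv someI_ex)
  have inj: "inj_on f \<tau>"
  proof (rule inj_onI)
    fix i j assume ij: "i \<in> \<tau>" "j \<in> \<tau>" "f i = f j"
    show "i = j"
    proof (rule ccontr)
      assume "i \<noteq> j"
      then have "U i \<inter> U j = {}" using H ij t unfolding hard_partition_def by blast
      then show False using f[OF ij(1)] f[OF ij(2)] ij(3) by auto
    qed
  qed
  have sub: "f ` \<tau> \<subseteq> \<sigma>" using f by auto
  have fs: "finite \<sigma>" using K s unfolding simplicial_complex_def by blast
  have "f ` \<tau> = \<sigma>"
    using card_subset_eq[OF fs sub] card_image[OF inj] c by simp
  then obtain j where "j \<in> \<tau>" "v = f j" using v by auto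
  then show ?thesis using f by blast
qed

lemma finite_simp: "simplicial_complex K \<Longrightarrow> finite (simplices K p)"
  unfolding simplicial_complex_def simplices_def by auto

lemma part1:
  assumes K: "simplicial_complex K" and H: "hard_partition K U m"
  shows "simplices (nerve K U m) p = S_columns K U m p"
proof (cases "p = 0")
  case True
  show ?thesis
  proof
    show "simplices (nerve K U m) p \<subseteq> S_columns K U m p"
      using True by (auto simp: simplices_def S_columns_def nerve_mem card_Suc_eq)
  next
    show "S_columns K U m p \<subseteq> simplices (nerve K U m) p"
    proof
      fix \<tau> assume "\<tau> \<in> S_columns K U m p"
      then obtain j where j: "\<tau> = {j}" "j \<in> {1..m}" using True by (auto simp: S_columns_def)
      then obtain v where "v \<in> U j" using H unfolding hard_partition_def by blast
      then have "v \<in> vertices K" using H j unfolding hard_partition_def by blast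
      then obtain \<sigma> where "\<sigma> \<in> K" "v \<in> \<sigma>" unfolding vertices_def by blast
      then show "\<tau> \<in> simplices (nerve K U m) p"
        using True j \<open>v \<in> U j\<close> by (auto simp: simplices_def nerve_mem)
    qed
  qed
next
  case False
  show ?thesis
  proof
    show "simplices (nerve K U m) p \<subseteq> S_columns K U m p"
    proof
      fix \<tau> assume a: "\<tau> \<in> simplices (nerve K U m) p"
      then have c: "card \<tau> = p + 1" and n: "\<tau> \<in> nerve K U m" by (auto simp: simplices_def)
      then have fin: "finite \<tau>" by (metis card.infinite add_is_0 one_neq_zero)
      from n obtain \<sigma> where s: "\<sigma> \<in> K" "\<forall>i\<in>\<tau>. \<sigma> \<inter> U i \<noteq> {}" and t: "\<tau> \<noteq> {}" "\<tau> \<subseteq> {1..m}"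
        by (auto simp: nerve_mem)
      obtain \<sigma>' where "\<sigma>' \<in> K" "card \<sigma>' = card \<tau>" "\<forall>j\<in>\<tau>. \<sigma>' \<inter> U j \<noteq> {}"
        using pick[OF K H s(1) t(2) fin t(1) s(2)] by blast
      then show "\<tau> \<in> S_columns K U m p"
        using False c t fin by (auto simp: S_columns_def simplices_def Sqp_ne0)
    qed
  next
    show "S_columns K U m p \<subseteq> simplices (nerve K U m) p"
    proof
      fix \<tau> assume "\<tau> \<in> S_columns K U m p"
      then have c: "card \<tau> = p + 1" and t: "\<tau> \<subseteq> {1..m}"
        and "\<exists>\<sigma>\<in>simplices K p. Sqp U \<sigma> \<tau> \<noteq> 0"
        using False by (auto simp: S_columns_def)
      moreover have fin: "finite \<tau>" using c by (metis card.infinite add_is_0 one_neq_zero)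
      ultimately obtain \<sigma> where "\<sigma> \<in> K" "\<forall>i\<in>\<tau>. \<sigma> \<inter> U i \<noteq> {}"
        by (auto simp: simplices_def Sqp_ne0)
      moreover have "\<tau> \<noteq> {}" using c by auto
      ultimately show "\<tau> \<in> simplices (nerve K U m) p"
        using c t by (auto simp: simplices_def nerve_mem)
    qed
  qed
qed

lemma cols_card:
  assumes "\<tau> \<in> S_columns K U m p"
  shows "card \<tau> = p + 1 \<and> \<tau> \<subseteq> {1..m} \<and> finite \<tau>"
  using assms by (cases "p = 0") (auto simp: S_columns_def intro: card_ge_0_finite)

lemma pooled_ne0:
  assumes K: "simplicial_complex K"
  shows "pooled_boundary K U p \<tau>' \<tau> \<noteq> 0 \<longleftrightarrow>
    (\<exists>\<rho>\<in>simplices K (p - 1). \<exists>\<sigma>\<in>simplices K p. \<rho> \<subseteq> \<sigma> \<and> Sqp U \<rho> \<tau>' \<noteq> 0 \<and> Sqp U \<sigma> \<tau> \<noteq> 0)"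
proof -
  have nn: "0 \<le> Sqp U \<rho> \<tau>' * abs_boundary K p \<rho> \<sigma> * Sqp U \<sigma> \<tau>" for \<rho> \<sigma>
    using Sqp_nonneg by (auto simp: abs_boundary_def intro!: mult_nonneg_nonneg)
  have "pooled_boundary K U p \<tau>' \<tau> \<noteq> 0 \<longleftrightarrow>
    (\<exists>\<rho>\<in>simplices K (p - 1). (\<Sum>\<sigma>\<in>simplices K p. Sqp U \<rho> \<tau>' * abs_boundary K p \<rho> \<sigma> * Sqp U \<sigma> \<tau>) \<noteq> 0)"
    unfolding pooled_boundary_def
    by (subst sum_nonneg_eq_0_iff) (auto simp: finite_simp[OF K] nn intro!: sum_nonneg)
  also have "\<dots> \<longleftrightarrow> (\<exists>\<rho>\<in>simplices K (p - 1). \<exists>\<sigma>\<in>simplices K p.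
        Sqp U \<rho> \<tau>' * abs_boundary K p \<rho> \<sigma> * Sqp U \<sigma> \<tau> \<noteq> 0)"
    by (subst sum_nonneg_eq_0_iff) (auto simp: finite_simp[OF K] nn)
  also have "\<dots> \<longleftrightarrow> (\<exists>\<rho>\<in>simplices K (p - 1). \<exists>\<sigma>\<in>simplices K p. \<rho> \<subseteq> \<sigma> \<and> Sqp U \<rho> \<tau>' \<noteq> 0 \<and> Sqp U \<sigma> \<tau> \<noteq> 0)"
    by (intro bex_cong refl) (auto simp: abs_boundary_def)
  finally show ?thesis .
qed

theorem theorem4p1:
  fixes K :: "'a set set" and U :: "nat \<Rightarrow> 'a set" and m :: nat
  assumes "simplicial_complex K"
    and "hard_partition K U m"
  shows "(\<forall>p. simplices (nerve K U m) p = S_columns K U m p) \<and>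
         (\<forall>p\<ge>1. \<forall>\<tau>'\<in>S_columns K U m (p - 1). \<forall>\<tau>\<in>S_columns K U m p.
             (pooled_boundary K U p \<tau>' \<tau> \<noteq> 0 \<longleftrightarrow> \<tau>' \<subseteq> \<tau>) \<and>
             (pooled_boundary K U p \<tau>' \<tau> \<noteq> 0 \<longleftrightarrow>
                abs_boundary (nerve K U m) p \<tau>' \<tau> \<noteq> 0))"
proof -
  note K = assms(1) and H = assms(2)
  have P1: "\<forall>p. simplices (nerve K U m) p = S_columns K U m p" using part1[OF K H] by blast
  have P2: "pooled_boundary K U p \<tau>' \<tau> \<noteq> 0 \<longleftrightarrow> \<tau>' \<subseteq> \<tau>"
    if p: "p \<ge> 1" and t': "\<tau>' \<in> S_columns K U m (p - 1)" and t: "\<tau> \<in> S_columns K U m p" for p \<tau>' \<tau>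
  proof -
    have c': "card \<tau>' = p" "\<tau>' \<subseteq> {1..m}" "finite \<tau>'" using cols_card[OF t'] p by auto
    have c: "card \<tau> = p + 1" "\<tau> \<subseteq> {1..m}" "finite \<tau>" using cols_card[OF t] by auto
    show ?thesis
    proof
      assume "pooled_boundary K U p \<tau>' \<tau> \<noteq> 0"
      then obtain \<rho> \<sigma> where r: "\<rho> \<in> simplices K (p - 1)" and s: "\<sigma> \<in> simplices K p"
        and rs: "\<rho> \<subseteq> \<sigma>" and m1: "\<forall>j\<in>\<tau>'. \<rho> \<inter> U j \<noteq> {}" and m2: "\<forall>j\<in>\<tau>. \<sigma> \<inter> U j \<noteq> {}"
        using pooled_ne0[OF K] c c' by (auto simp: Sqp_ne0)
      have sK: "\<sigma> \<in> K" "card \<sigma> = card \<tau>" using s c by (auto simp: simplices_def)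
      show "\<tau>' \<subseteq> \<tau>"
      proof
        fix j assume j: "j \<in> \<tau>'"
        then obtain v where v: "v \<in> \<rho>" "v \<in> U j" using m1 by blast
        then obtain k where k: "k \<in> \<tau>" "v \<in> U k"
          using cover[OF K H sK(1) c(2) c(3) sK(2) m2] rs by blast
        have "j = k"
        proof (rule ccontr)
          assume "j \<noteq> k"
          then have "U j \<inter> U k = {}" using H j k c c' unfolding hard_partition_def by blast
          then show False using v k by auto
        qed
        then show "j \<in> \<tau>" using k by simp
      qed
    next
      assume sub: "\<tau>' \<subseteq> \<tau>"
      from t obtain \<sigma> where s: "\<sigma> \<in> simplices K p" "\<forall>j\<in>\<tau>. \<sigma> \<inter> U j \<noteq> {}"
      proof (cases "p = 0")
        case False
        then show ?thesis using t c that by (auto simp: S_columns_def Sqp_ne0)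
      qed (use p in auto)
      have sK: "\<sigma> \<in> K" using s by (auto simp: simplices_def)
      have ne: "\<tau>' \<noteq> {}" using c' p by auto
      obtain \<rho> where r: "\<rho> \<subseteq> \<sigma>" "\<rho> \<in> K" "card \<rho> = card \<tau>'" "\<forall>j\<in>\<tau>'. \<rho> \<inter> U j \<noteq> {}"
        using pick[OF K H sK c'(2) c'(3) ne] s(2) sub by blast
      have "\<rho> \<in> simplices K (p - 1)" using r c' p by (auto simp: simplices_def)
      then show "pooled_boundary K U p \<tau>' \<tau> \<noteq> 0"
        using pooled_ne0[OF K] s r c c' by (auto simp: Sqp_ne0)
    qed
  qed
  show ?thesis
  proof (intro conjI allI impI ballI)
    fix p \<tau>' \<tau> assume p: "1 \<le> p" and t': "\<tau>' \<in> S_columns K U m (p - 1)" and t: "\<tau> \<in> S_columns K U m p"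
    show "pooled_boundary K U p \<tau>' \<tau> \<noteq> 0 \<longleftrightarrow> \<tau>' \<subseteq> \<tau>" using P2[OF p t' t] .
    show "pooled_boundary K U p \<tau>' \<tau> \<noteq> 0 \<longleftrightarrow> abs_boundary (nerve K U m) p \<tau>' \<tau> \<noteq> 0"
      using P2[OF p t' t] P1 t t' by (auto simp: abs_boundary_def)
  qed (use P1 in auto)
qed

end
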